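(* Let $P$ be a pre-run of vocabulary $\Upsilon_0^+$ satisfying the Train Motion requirement, and let $A$ be an initial state of the railroad ealgebra whose $\Upsilon_0^+$-reduct equals $P(0)$. Then there is exactly one run $Q$ of the one-module program Controller (over vocabulary $\Upsilon_1^+$, with TrackStatus external and Deadline, Dir internal) such that $Q(0)$ is the $\Upsilon_1^+$-reduct of $A$, the $\Upsilon_0^+$-reduct of $Q(t)$ equals $P(t)$ for all $t\ge0$, and Controller is immediate in $Q$.
   Context: Setting (evolving algebra for the railroad crossing). States are structures over a vocabulary $\Upsilon\cup\{\mathrm{CT}\}$ where $\Upsilon$ contains: a finite universe Tracks; the reals and ExtendedReals $=\mathbb{R}\cup\{\infty\}$ with standard $<$ and $+$ ($\infty$ largest); positive real constants $d_{close},d_{open},d_{min},d_{max}$ with $d_{close}<d_{min}\le d_{max}$; a unary function TrackStatus from Tracks to $\{\text{empty},\text{coming},\text{incrossing}\}$; a unary function Deadline from Tracks to ExtendedReals; a nullary Dir with values in $\{\text{open},\text{close}\}$; a nullary GateStatus with values in $\{\text{opened},\text{closed}\}$; and $\mathrm{CT}$ is a nullary real-valued symbol (current time). Let $\Upsilon_1=\Upsilon\setminus\{\mathrm{GateStatus}\}$, $\Upsilon_0=\Upsilon_1\setminus\{\mathrm{Deadline},\mathrm{Dir}\}$, and $\Upsilon_i^+=\Upsilon_i\cup\{\mathrm{CT}\}$. Put $W=d_{min}-d_{close}$. For a track $x$, SafeToOpen is $\forall x\in\mathrm{Tracks}$ [$\mathrm{TrackStatus}(x)=\text{empty}$ or $\mathrm{CT}+d_{open}<\mathrm{Deadline}(x)$].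 The module Controller executes simultaneously, for every track $x$, SetDeadline$(x)$ "if TrackStatus$(x)$=coming and Deadline$(x)=\infty$ then Deadline$(x):=\mathrm{CT}+W$", SignalClose$(x)$ "if $\mathrm{CT}=$Deadline$(x)$ then Dir:=close", ClearDeadline$(x)$ "if TrackStatus$(x)$=empty and Deadline$(x)<\infty$ then Deadline$(x):=\infty$", together with SignalOpen "if Dir=close and SafeToOpen then Dir:=open". Executing it means computing all updates generated in the current state and performing them simultaneously (nothing happens if inconsistent). It is enabled at a state if its update set is consistent and contains an update that changes the state. Runs: for a map $t\mapsto R(t)$, $t\in[0,\infty)$, to states of a vocabulary $V\cup\{\mathrm{CT}\}$, let $\rho(t)$ be the reduct to $V$. $R$ is a pre-run if all $R(t)$ share a superuniverse, $\mathrm{CT}=t$ in $R(t)$, and for every $\tau>0$ there are $0=t_0<\dots<t_n=\tau$ with $\rho$ constant on each $(t_i,t_{i+1})$; $\rho(t+)$, $\rho(t-)$ are the one-sided constant values. A pre-run is a run of a program if (i) whenever $\rho(t+)\neq\rho(t)$, $\rho(t+)$ is the $V$-reduct of the result of executing some of its modules at $R(t)$ (these fire at $t$), with external functions equal in $\rho(t)$ and $\rho(t+)$; (ii) whenever $t>0$ and $\rho(t)\ne\rho(t-)$, they differ only in external functions. An agent is immediate if it fires at every moment at which it is enabled. Initial states: TrackStatus$(x)$=empty and Deadline$(x)=\infty$ for every track $x$. Train Motion requirement for $P$: for each track $x$ there is a finite or infinite sequence $0=t_0<t_1<t_2<\cdots$ with TrackStatus$(x)$=empty over each $[t_{3i},t_{3i+1})$,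 =coming over each $[t_{3i+1},t_{3i+2})$ where $d_{min}\le t_{3i+2}-t_{3i+1}\le d_{max}$, =incrossing over each $[t_{3i+2},t_{3i+3})$, and, if the sequence is finite with last element $t_k$, then $3\mid k$ and TrackStatus$(x)$=empty over $[t_k,\infty)$. *)

theory Defs
  imports Main "HOL.Real"
begin

datatype tstatus = Empty | Coming | Incrossing
datatype dirv = DOpen | DClose
datatype gstatus = Opened | Closed

datatype xreal = Fin real | Infty

fun xless :: "xreal \<Rightarrow> xreal \<Rightarrow> bool" where
  "xless (Fin a) (Fin b) = (a < b)"
| "xless (Fin a) Infty = True"
| "xless Infty _ = False"

text \<open>States of vocabulary Upsilon_1 (without CT; CT is the time argument of a run).
  Tracks is the finite type 'tr; the static part (reals, constants d_close etc.)
  is given by fixed parameters.\<close>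
record 'tr st1 =
  ts :: "'tr \<Rightarrow> tstatus"
  dl :: "'tr \<Rightarrow> xreal"
  dr :: dirv

record 'tr stfull = "'tr st1" +
  gate :: gstatus
  ct :: real

datatype 'tr loc = LDeadline 'tr | LDir
datatype val = VX xreal | VD dirv

definition loc_val :: "'tr st1 \<Rightarrow> 'tr loc \<Rightarrow> val" where
  "loc_val s l = (case l of LDeadline x \<Rightarrow> VX (dl s x) | LDir \<Rightarrow> VD (dr s))"

definition safe_to_open :: "real \<Rightarrow> 'tr st1 \<Rightarrow> real \<Rightarrow> bool" where
  "safe_to_open d_open s CT = (\<forall>x. ts s x = Empty \<or> xless (Fin (CT + d_open)) (dl s x))"

definition ctrl_updates :: "real \<Rightarrow> real \<Rightarrow> 'tr st1 \<Rightarrow> real \<Rightarrow> ('tr loc \<times> val) set" where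
  "ctrl_updates W d_open s CT =
     {(LDeadline x, VX (Fin (CT + W))) | x. ts s x = Coming \<and> dl s x = Infty}
   \<union> {(LDir, VD DClose) | x. Fin CT = dl s x}
   \<union> {(LDeadline x, VX Infty) | x. ts s x = Empty \<and> xless (dl s x) Infty}
   \<union> (if dr s = DClose \<and> safe_to_open d_open s CT then {(LDir, VD DOpen)} else {})"

definition consistent :: "('tr loc \<times> val) set \<Rightarrow> bool" where
  "consistent U = (\<forall>l v w. (l, v) \<in> U \<longrightarrow> (l, w) \<in> U \<longrightarrow> v = w)"

definition apply_updates :: "('tr loc \<times> val) set \<Rightarrow> 'tr st1 \<Rightarrow> 'tr st1" where
  "apply_updates U s = s\<lparr>
     dl := (\<lambda>x. if \<exists>v. (LDeadline x, v) \<in> U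
                then (case (SOME v. (LDeadline x, v) \<in> U) of VX e \<Rightarrow> e | VD _ \<Rightarrow> dl s x)
                else dl s x),
     dr := (if \<exists>v. (LDir, v) \<in> U
            then (case (SOME v. (LDir, v) \<in> U) of VD d \<Rightarrow> d | VX _ \<Rightarrow> dr s)
            else dr s)\<rparr>"

definition exec_upd :: "('tr loc \<times> val) set \<Rightarrow> 'tr st1 \<Rightarrow> 'tr st1" where
  "exec_upd U s = (if consistent U then apply_updates U s else s)"

definition enabled :: "('tr loc \<times> val) set \<Rightarrow> 'tr st1 \<Rightarrow> bool" where
  "enabled U s = (consistent U \<and> (\<exists>(l, v) \<in> U. loc_val s l \<noteq> v))"

definition ctrl_exec :: "real \<Rightarrow> real \<Rightarrow> 'tr st1 \<Rightarrow> real \<Rightarrow> 'tr st1" where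
  "ctrl_exec W d_open s CT = exec_upd (ctrl_updates W d_open s CT) s"

definition ctrl_enabled :: "real \<Rightarrow> real \<Rightarrow> 'tr st1 \<Rightarrow> real \<Rightarrow> bool" where
  "ctrl_enabled W d_open s CT = enabled (ctrl_updates W d_open s CT) s"

text \<open>A pre-run is represented by its reduct rho (CT = t is implicit); only t >= 0 matters.\<close>
definition pre_run :: "(real \<Rightarrow> 'a) \<Rightarrow> bool" where
  "pre_run \<rho> = (\<forall>\<tau>>0. \<exists>(n::nat) (t::nat \<Rightarrow> real). t 0 = 0 \<and> t n = \<tau> \<and>
      (\<forall>i<n. t i < t (Suc i)) \<and>
      (\<forall>i<n. \<exists>v. \<forall>s. t i < s \<and> s < t (Suc i) \<longrightarrow> \<rho> s = v))"

definition right_val :: "(real \<Rightarrow> 'a) \<Rightarrow> real \<Rightarrow> 'a" where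
  "right_val \<rho> t = (THE v. \<exists>e>0. \<forall>s. t < s \<and> s < t + e \<longrightarrow> \<rho> s = v)"

definition left_val :: "(real \<Rightarrow> 'a) \<Rightarrow> real \<Rightarrow> 'a" where
  "left_val \<rho> t = (THE v. \<exists>e>0. \<forall>s. t - e < s \<and> s < t \<longrightarrow> \<rho> s = v)"

text \<open>Run of the one-module program Controller; TrackStatus external, Deadline and Dir internal.\<close>
definition is_ctrl_run :: "real \<Rightarrow> real \<Rightarrow> (real \<Rightarrow> 'tr st1) \<Rightarrow> bool" where
  "is_ctrl_run W d_open Q = (pre_run Q \<and>
     (\<forall>t\<ge>0. right_val Q t \<noteq> Q t \<longrightarrow>
        right_val Q t = ctrl_exec W d_open (Q t) t \<and> ts (right_val Q t) = ts (Q t)) \<and>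
     (\<forall>t>0. Q t \<noteq> left_val Q t \<longrightarrow>
        dl (Q t) = dl (left_val Q t) \<and> dr (Q t) = dr (left_val Q t)))"

definition ctrl_immediate :: "real \<Rightarrow> real \<Rightarrow> (real \<Rightarrow> 'tr st1) \<Rightarrow> bool" where
  "ctrl_immediate W d_open Q = (\<forall>t\<ge>0. ctrl_enabled W d_open (Q t) t \<longrightarrow>
      right_val Q t = ctrl_exec W d_open (Q t) t)"

text \<open>K = None: infinite sequence; K = Some k: finite sequence t_0,...,t_k.\<close>
definition train_motion :: "real \<Rightarrow> real \<Rightarrow> (real \<Rightarrow> 'tr \<Rightarrow> tstatus) \<Rightarrow> bool" where
  "train_motion d_min d_max P = (\<forall>x. \<exists>(t::nat \<Rightarrow> real) (K::nat option).
     (let idx = (\<lambda>i. case K of None \<Rightarrow> True | Some k \<Rightarrow> i \<le> k) in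
      t 0 = 0 \<and>
      (\<forall>i. idx (Suc i) \<longrightarrow> t i < t (Suc i)) \<and>
      (\<forall>i. idx (3*i+1) \<longrightarrow> (\<forall>s. t (3*i) \<le> s \<and> s < t (3*i+1) \<longrightarrow> P s x = Empty)) \<and>
      (\<forall>i. idx (3*i+2) \<longrightarrow> (\<forall>s. t (3*i+1) \<le> s \<and> s < t (3*i+2) \<longrightarrow> P s x = Coming) \<and>
                            d_min \<le> t (3*i+2) - t (3*i+1) \<and> t (3*i+2) - t (3*i+1) \<le> d_max) \<and>
      (\<forall>i. idx (3*i+3) \<longrightarrow> (\<forall>s. t (3*i+2) \<le> s \<and> s < t (3*i+3) \<longrightarrow> P s x = Incrossing)) \<and>
      (\<forall>k. K = Some k \<longrightarrow> 3 dvd k \<and> (\<forall>s. t k \<le> s \<longrightarrow> P s x = Empty))))"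

definition initial_state :: "('tr, 'z) stfull_scheme \<Rightarrow> bool" where
  "initial_state A = (\<forall>x. ts A x = Empty \<and> dl A x = Infty)"

end

theory Submission
  imports Defs
begin
definition constR :: "(real \<Rightarrow> 'a) \<Rightarrow> real \<Rightarrow> real \<Rightarrow> 'a \<Rightarrow> bool" where
  "constR f t e v = (\<forall>s. t < s \<and> s < t + e \<longrightarrow> f s = v)"
definition constL :: "(real \<Rightarrow> 'a) \<Rightarrow> real \<Rightarrow> real \<Rightarrow> 'a \<Rightarrow> bool" where
  "constL f t e v = (\<forall>s. t - e < s \<and> s < t \<longrightarrow> f s = v)"

lemma right_val_eq: assumes "e > 0" "constR f t e v" shows "right_val f t = v"
  unfolding right_val_def
proof (rule the_equality)
  show "\<exists>e>0. \<forall>s. t < s \<and> s < t + e \<longrightarrow> f s = v" using assms unfolding constR_def by blast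
next
  fix v' assume "\<exists>e>0. \<forall>s. t < s \<and> s < t + e \<longrightarrow> f s = v'"
  then obtain e' where e': "e' > 0" "\<forall>s. t < s \<and> s < t + e' \<longrightarrow> f s = v'" by blast
  define s where "s = t + min e e' / 2"
  have "f s = v" using assms unfolding constR_def s_def by (smt (verit) e'(1) field_sum_of_halves)
  moreover have "f s = v'" using e' assms(1) unfolding s_def by (smt (verit) field_sum_of_halves)
  ultimately show "v' = v" by simp
qed

lemma left_val_eq: assumes "e > 0" "constL f t e v" shows "left_val f t = v"
  unfolding left_val_def
proof (rule the_equality)
  show "\<exists>e>0. \<forall>s. t - e < s \<and> s < t \<longrightarrow> f s = v" using assms unfolding constL_def by blast
next
  fix v' assume "\<exists>e>0. \<forall>s. t - e < s \<and> s < t \<longrightarrow> f s = v'"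
  then obtain e' where e': "e' > 0" "\<forall>s. t - e' < s \<and> s < t \<longrightarrow> f s = v'" by blast
  define s where "s = t - min e e' / 2"
  have "f s = v" using assms unfolding constL_def s_def by (smt (verit) e'(1) field_sum_of_halves)
  moreover have "f s = v'" using e' assms(1) unfolding s_def by (smt (verit) field_sum_of_halves)
  ultimately show "v' = v" by simp
qed

lemma pre_run_right: assumes "pre_run \<rho>" "t \<ge> 0" shows "\<exists>e>0. \<exists>v. constR \<rho> t e v"
proof -
  have "t + 1 > 0" using assms(2) by simp
  from assms(1)[unfolded pre_run_def, rule_format, OF this]
  obtain n T where T: "T 0 = 0" "T n = t + 1" "\<forall>i<n. \<exists>v. \<forall>s. T i < s \<and> s < T (Suc i) \<longrightarrow> \<rho> s = v"
    by blast
  define j where "j = (GREATEST i. i \<le> n \<and> T i \<le> t)"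
  have j1: "j \<le> n \<and> T j \<le> t" unfolding j_def
    by (rule GreatestI_nat[of _ 0 n]) (use T assms in auto)
  have j2: "\<not> T (Suc j) \<le> t" if "Suc j \<le> n"
  proof
    assume "T (Suc j) \<le> t"
    then have "Suc j \<le> (GREATEST i. i \<le> n \<and> T i \<le> t)" by (intro Greatest_le_nat[of _ _ n]) (use that in auto)
    then have "Suc j \<le> j" unfolding j_def .
    then show False by simp
  qed
  have "j < n" using j1 T(2) by (metis le_neq_implies_less linorder_not_less less_add_one)
  then obtain v where v: "\<forall>s. T j < s \<and> s < T (Suc j) \<longrightarrow> \<rho> s = v" using T by blast
  have "T (Suc j) > t" using j2 \<open>j < n\<close> by simp
  then have "constR \<rho> t (T (Suc j) - t) v" unfolding constR_def using v j1 by auto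
  then show ?thesis using \<open>T (Suc j) > t\<close> by (intro exI[of _ "T (Suc j) - t"]) auto
qed

lemma pre_run_left: assumes "pre_run \<rho>" "t > 0" shows "\<exists>e>0. \<exists>v. constL \<rho> t e v"
proof -
  from assms(1)[unfolded pre_run_def, rule_format, OF assms(2)]
  obtain n T where T: "T 0 = 0" "T n = t" "\<forall>i<n. \<exists>v. \<forall>s. T i < s \<and> s < T (Suc i) \<longrightarrow> \<rho> s = v"
    by blast
  define j where "j = (GREATEST i. i \<le> n \<and> T i < t)"
  have j1: "j \<le> n \<and> T j < t" unfolding j_def
    by (rule GreatestI_nat[of _ 0 n]) (use T assms in auto)
  have j2: "\<not> T (Suc j) < t" if "Suc j \<le> n"
  proof
    assume "T (Suc j) < t"
    then have "Suc j \<le> (GREATEST i. i \<le> n \<and> T i < t)" by (intro Greatest_le_nat[of _ _ n]) (use that in auto)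
    then have "Suc j \<le> j" unfolding j_def .
    then show False by simp
  qed
  have "j < n" using j1 T(2) by (metis le_neq_implies_less less_irrefl)
  then obtain v where v: "\<forall>s. T j < s \<and> s < T (Suc j) \<longrightarrow> \<rho> s = v" using T by blast
  have "T (Suc j) \<ge> t" using j2 \<open>j < n\<close> by simp
  then have "constL \<rho> t (t - T j) v" unfolding constL_def using v j1 by auto
  then show ?thesis using j1 by (intro exI[of _ "t - T j"]) auto
qed

definition part :: "(real \<Rightarrow> 'a) \<Rightarrow> real \<Rightarrow> bool" where
  "part \<rho> a = (\<exists>(n::nat) (T::nat \<Rightarrow> real). T 0 = 0 \<and> T n = a \<and>
      (\<forall>i<n. T i < T (Suc i)) \<and>
      (\<forall>i<n. \<exists>v. \<forall>s. T i < s \<and> s < T (Suc i) \<longrightarrow> \<rho> s = v))"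

lemma part0: "part \<rho> 0"
  unfolding part_def by (rule exI[of _ 0], rule exI[of _ "\<lambda>_. 0"]) auto

lemma part_ext: assumes "part \<rho> a" "a < b" "\<forall>s. a < s \<and> s < b \<longrightarrow> \<rho> s = v"
  shows "part \<rho> b"
proof -
  obtain n T where T: "T 0 = 0" "T n = a" "\<forall>i<n. T i < T (Suc i)"
    "\<forall>i<n. \<exists>v. \<forall>s. T i < s \<and> s < T (Suc i) \<longrightarrow> \<rho> s = v"
    using assms(1) unfolding part_def by blast
  define T' where "T' = T(Suc n := b)"
  have "T' 0 = 0" "T' (Suc n) = b" using T unfolding T'_def by auto
  moreover have "\<forall>i<Suc n. T' i < T' (Suc i)"
    using T assms(2) unfolding T'_def by (auto simp: less_Suc_eq)
  moreover have "\<forall>i<Suc n. \<exists>v. \<forall>s. T' i < s \<and> s < T' (Suc i) \<longrightarrow> \<rho> s = v"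
  proof (intro allI impI)
    fix i assume "i < Suc n"
    then consider "i < n" | "i = n" by linarith
    then show "\<exists>v. \<forall>s. T' i < s \<and> s < T' (Suc i) \<longrightarrow> \<rho> s = v"
    proof cases
      case 1 then show ?thesis using T(4) unfolding T'_def by auto
    next
      case 2 then show ?thesis using assms(3) T(2) unfolding T'_def by auto
    qed
  qed
  ultimately show ?thesis unfolding part_def by blast
qed

lemma pre_run_intro:
  assumes R: "\<forall>t\<ge>0. \<exists>e>0. \<exists>v. constR \<rho> t e v"
    and L: "\<forall>t>0. \<exists>e>0. \<exists>v. constL \<rho> t e v"
  shows "pre_run \<rho>"
  unfolding pre_run_def
proof (intro allI impI)
  fix \<tau> :: real assume "\<tau> > 0"
  define G where "G = {a. 0 \<le> a \<and> a \<le> \<tau> \<and> part \<rho> a}"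
  have G0: "0 \<in> G" using \<open>\<tau> > 0\<close> part0 unfolding G_def by auto
  have bdd: "bdd_above G" unfolding G_def by (rule bdd_aboveI[of _ \<tau>]) auto
  define b where "b = Sup G"
  have b0: "0 \<le> b" unfolding b_def using G0 bdd by (meson cSup_upper)
  have bt: "b \<le> \<tau>" unfolding b_def using G0 by (intro cSup_least) (auto simp: G_def)
  have pb: "part \<rho> b"
  proof (cases "b = 0")
    case True then show ?thesis using part0 by simp
  next
    case False
    then have "b > 0" using b0 by simp
    then obtain e v where ev: "e > 0" "constL \<rho> b e v" using L by blast
    have "b - e < Sup G" using ev b_def by simp
    then obtain a where a: "a \<in> G" "b - e < a" using less_cSup_iff[OF _ bdd] G0 by blast
    have "a \<le> b" unfolding b_def using a bdd by (meson cSup_upper)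
    show ?thesis
    proof (cases "a = b")
      case True then show ?thesis using a G_def by auto
    next
      case False
      then have "a < b" using \<open>a \<le> b\<close> by simp
      show ?thesis
        by (rule part_ext[of _ a _ v]) (use a \<open>a < b\<close> ev in \<open>auto simp: G_def constL_def\<close>)
    qed
  qed
  have "b = \<tau>"
  proof (rule ccontr)
    assume "b \<noteq> \<tau>"
    then have "b < \<tau>" using bt by simp
    obtain e v where ev: "e > 0" "constR \<rho> b e v" using R b0 by blast
    define c where "c = b + min e (\<tau> - b) / 2"
    have "b < c" "c \<le> \<tau>" "c < b + e" using ev \<open>b < \<tau>\<close> unfolding c_def by (auto simp: min_def field_simps)
    have "part \<rho> c"
      by (rule part_ext[OF pb \<open>b < c\<close>, of v]) (use ev \<open>c < b + e\<close> in \<open>auto simp: constR_def\<close>)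
    then have "c \<in> G" using \<open>b < c\<close> \<open>c \<le> \<tau>\<close> b0 unfolding G_def by auto
    then have "c \<le> b" unfolding b_def using bdd by (meson cSup_upper)
    then show False using \<open>b < c\<close> by simp
  qed
  then show "\<exists>(n::nat) (t::nat \<Rightarrow> real). t 0 = 0 \<and> t n = \<tau> \<and>
      (\<forall>i<n. t i < t (Suc i)) \<and> (\<forall>i<n. \<exists>v. \<forall>s. t i < s \<and> s < t (Suc i) \<longrightarrow> \<rho> s = v)"
    using pb unfolding part_def by simp
qed

lemma finite_common:
  assumes "finite (UNIV :: 'x set)" "\<forall>x::'x. \<exists>e>0. R x e"
    and "\<forall>x e e'. R x e \<longrightarrow> 0 < e' \<longrightarrow> e' \<le> e \<longrightarrow> R x e'"
  shows "\<exists>e>0. \<forall>x. R x (e::real)"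
proof -
  obtain f where f: "\<forall>x. f x > 0 \<and> R x (f x)" using assms(2) by metis
  define e where "e = Min (range f)"
  have fin: "finite (range f)" using assms(1) by simp
  have "e \<in> range f" unfolding e_def using fin by (intro Min_in) auto
  then have "e > 0" using f by auto
  moreover have "\<forall>x. e \<le> f x" unfolding e_def using fin by auto
  ultimately show ?thesis using f assms(3) by blast
qed

lemma some_upd: "consistent U \<Longrightarrow> (l, v) \<in> U \<Longrightarrow> (SOME v. (l, v) \<in> U) = v"
  unfolding consistent_def by (metis (mono_tags, lifting) someI)

lemma exec_not_enabled: assumes "\<not> enabled U s" shows "exec_upd U s = s"
proof (cases "consistent U")
  case False then show ?thesis unfolding exec_upd_def by simp
next
  case True
  then have triv: "\<And>l v. (l, v) \<in> U \<Longrightarrow> loc_val s l = v" using assms unfolding enabled_def by auto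
  have dl: "(\<lambda>x. if \<exists>v. (LDeadline x, v) \<in> U
                then (case (SOME v. (LDeadline x, v) \<in> U) of VX e \<Rightarrow> e | VD _ \<Rightarrow> dl s x)
                else dl s x) = dl s"
  proof
    fix x show "(if \<exists>v. (LDeadline x, v) \<in> U
                then (case (SOME v. (LDeadline x, v) \<in> U) of VX e \<Rightarrow> e | VD _ \<Rightarrow> dl s x)
                else dl s x) = dl s x"
    proof (cases "\<exists>v. (LDeadline x, v) \<in> U")
      case True
      then obtain v where v: "(LDeadline x, v) \<in> U" by blast
      then have "v = VX (dl s x)" using triv[OF v] unfolding loc_val_def by simp
      then show ?thesis using some_upd[OF \<open>consistent U\<close> v] v by simp
    qed simp
  qed
  have dr: "(if \<exists>v. (LDir, v) \<in> U
            then (case (SOME v. (LDir, v) \<in> U) of VD d \<Rightarrow> d | VX _ \<Rightarrow> dr s)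
            else dr s) = dr s"
  proof (cases "\<exists>v. (LDir, v) \<in> U")
    case True
    then obtain v where v: "(LDir, v) \<in> U" by blast
    then have "v = VD (dr s)" using triv[OF v] unfolding loc_val_def by simp
    then show ?thesis using some_upd[OF \<open>consistent U\<close> v] v by simp
  qed simp
  show ?thesis unfolding exec_upd_def apply_updates_def using True dl dr by simp
qed

lemma rv_exec:
  assumes "is_ctrl_run W d Q" "ctrl_immediate W d Q" "t \<ge> 0"
  shows "right_val Q t = ctrl_exec W d (Q t) t"
proof (cases "ctrl_enabled W d (Q t) t")
  case True then show ?thesis using assms unfolding ctrl_immediate_def by blast
next
  case False
  then have "ctrl_exec W d (Q t) t = Q t"
    unfolding ctrl_exec_def ctrl_enabled_def by (rule exec_not_enabled)
  then show ?thesis using assms(1,3) unfolding is_ctrl_run_def by metis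
qed

lemma st1_eq: "ts a = ts b \<Longrightarrow> dl a = dl b \<Longrightarrow> dr a = dr b \<Longrightarrow> (a :: 'tr st1) = b"
  by (cases a, cases b) simp

lemma lv_int:
  assumes "is_ctrl_run W d Q" "t > 0"
  shows "dl (Q t) = dl (left_val Q t) \<and> dr (Q t) = dr (left_val Q t)"
  using assms unfolding is_ctrl_run_def by metis

lemma run_unique:
  assumes r1: "is_ctrl_run W d Q1" "ctrl_immediate W d Q1"
    and r2: "is_ctrl_run W d Q2" "ctrl_immediate W d Q2"
    and init: "Q1 0 = Q2 0" and tse: "\<forall>t\<ge>0. ts (Q1 t) = ts (Q2 t)"
  shows "\<forall>t\<ge>0. Q1 t = Q2 t"
proof (rule ccontr)
  assume "\<not> (\<forall>t\<ge>0. Q1 t = Q2 t)"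
  define S where "S = {t. t \<ge> 0 \<and> Q1 t \<noteq> Q2 t}"
  have Sne: "S \<noteq> {}" using \<open>\<not> _\<close> S_def by auto
  have bdd: "bdd_below S" unfolding S_def by (rule bdd_belowI[of _ 0]) auto
  define a where "a = Inf S"
  have a0: "a \<ge> 0" unfolding a_def S_def using Sne by (intro cInf_greatest) (auto simp: S_def)
  have below: "Q1 t = Q2 t" if "0 \<le> t" "t < a" for t
  proof (rule ccontr)
    assume "Q1 t \<noteq> Q2 t"
    then have "t \<in> S" using that S_def by auto
    then have "a \<le> t" unfolding a_def using bdd by (meson cInf_lower)
    then show False using that by simp
  qed
  have pr1: "pre_run Q1" and pr2: "pre_run Q2" using r1 r2 unfolding is_ctrl_run_def by auto
  show False
  proof (cases "Q1 a = Q2 a")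
    case False
    then have "a \<noteq> 0" using init by auto
    then have "a > 0" using a0 by simp
    obtain e1 v1 where ev1: "e1 > 0" "constL Q1 a e1 v1" using pre_run_left[OF pr1 \<open>a > 0\<close>] by blast
    obtain e2 v2 where ev2: "e2 > 0" "constL Q2 a e2 v2" using pre_run_left[OF pr2 \<open>a > 0\<close>] by blast
    define s where "s = a - min (min e1 e2) a / 2"
    have s: "0 \<le> s" "s < a" "a - e1 < s" "a - e2 < s" using ev1 ev2 \<open>a > 0\<close> unfolding s_def by (auto simp: min_def)
    have "v1 = v2" using below[OF s(1,2)] ev1 ev2 s unfolding constL_def by metis
    have l1: "left_val Q1 a = v1" by (rule left_val_eq[OF ev1])
    have l2: "left_val Q2 a = v2" by (rule left_val_eq[OF ev2])
    have "Q1 a = Q2 a"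
      using lv_int[OF r1(1) \<open>a > 0\<close>] lv_int[OF r2(1) \<open>a > 0\<close>] l1 l2 \<open>v1 = v2\<close> tse a0
      by (intro st1_eq) auto
    then show False using False by simp
  next
    case True
    obtain e1 v1 where ev1: "e1 > 0" "constR Q1 a e1 v1" using pre_run_right[OF pr1 a0] by blast
    obtain e2 v2 where ev2: "e2 > 0" "constR Q2 a e2 v2" using pre_run_right[OF pr2 a0] by blast
    have "v1 = v2"
      using right_val_eq[OF ev1] right_val_eq[OF ev2] rv_exec[OF r1 a0] rv_exec[OF r2 a0] True by simp
    define e where "e = min e1 e2"
    have "e > 0" using ev1 ev2 e_def by simp
    have "a + e \<le> Inf S"
    proof (rule cInf_greatest[OF Sne])
      fix t assume "t \<in> S"
      then have t: "t \<ge> 0" "Q1 t \<noteq> Q2 t" unfolding S_def by auto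
      show "a + e \<le> t"
      proof (rule ccontr)
        assume "\<not> a + e \<le> t"
        then have "t < a + e" by simp
        consider "t < a" | "t = a" | "a < t" by linarith
        then show False
        proof cases
          case 1 then show ?thesis using below t by blast
        next
          case 2 then show ?thesis using True t by simp
        next
          case 3
          then have "Q1 t = v1" "Q2 t = v2" using ev1 ev2 \<open>t < a + e\<close> unfolding constR_def e_def by auto
          then show ?thesis using \<open>v1 = v2\<close> t by simp
        qed
      qed
    qed
    then show False using \<open>e > 0\<close> a_def by simp
  qed
qed

definition idxK :: "nat option \<Rightarrow> nat \<Rightarrow> bool" where
  "idxK K i = (case K of None \<Rightarrow> True | Some k \<Rightarrow> i \<le> k)"
definition jR :: "(nat \<Rightarrow> real) \<Rightarrow> nat option \<Rightarrow> real \<Rightarrow> nat" where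
  "jR t K u = (GREATEST j. idxK K j \<and> t j \<le> u)"
definition jL :: "(nat \<Rightarrow> real) \<Rightarrow> nat option \<Rightarrow> real \<Rightarrow> nat" where
  "jL t K u = (GREATEST j. idxK K j \<and> (j = 0 \<or> t j < u))"
definition Dv :: "(nat \<Rightarrow> real) \<Rightarrow> real \<Rightarrow> nat \<Rightarrow> xreal" where
  "Dv t W j = (if j mod 3 = 0 then Infty else Fin (t (j - j mod 3 + 1) + W))"
definition Dl :: "(nat \<Rightarrow> real) \<Rightarrow> nat option \<Rightarrow> real \<Rightarrow> real \<Rightarrow> xreal" where
  "Dl t K W u = Dv t W (jL t K u)"
definition phase :: "nat \<Rightarrow> tstatus" where
  "phase j = (if j mod 3 = 0 then Empty else if j mod 3 = 1 then Coming else Incrossing)"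

lemma modA: "(j::nat) mod 3 = 0 \<Longrightarrow> j > 0 \<Longrightarrow> (j - 1) mod 3 = 2"
  by (cases j) (auto simp: mod_Suc split: if_splits)
lemma modB: "(j::nat) mod 3 = 1 \<Longrightarrow> (j - 1) mod 3 = 0"
  by (cases j) (auto simp: mod_Suc split: if_splits)
lemma modC: "(j::nat) mod 3 = 2 \<Longrightarrow> (j - 1) mod 3 = 1"
  by (cases j) (auto simp: mod_Suc split: if_splits)
lemma modD: "(j::nat) mod 3 = 2 \<Longrightarrow> j - 2 + 1 = j - 1"
  by (cases j) auto

locale track =
  fixes t :: "nat \<Rightarrow> real" and K :: "nat option" and st :: "real \<Rightarrow> tstatus" and W dmin :: real
  assumes W0: "0 < W" and Wd: "W < dmin"
  and t0: "t 0 = 0"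
  and inc: "\<And>i. idxK K (Suc i) \<Longrightarrow> t i < t (Suc i)"
  and emp: "\<And>i s. idxK K (3*i+1) \<Longrightarrow> t (3*i) \<le> s \<Longrightarrow> s < t (3*i+1) \<Longrightarrow> st s = Empty"
  and com: "\<And>i s. idxK K (3*i+2) \<Longrightarrow> t (3*i+1) \<le> s \<Longrightarrow> s < t (3*i+2) \<Longrightarrow> st s = Coming"
  and comd: "\<And>i. idxK K (3*i+2) \<Longrightarrow> dmin \<le> t (3*i+2) - t (3*i+1)"
  and inc3: "\<And>i s. idxK K (3*i+3) \<Longrightarrow> t (3*i+2) \<le> s \<Longrightarrow> s < t (3*i+3) \<Longrightarrow> st s = Incrossing"
  and fin: "\<And>k. K = Some k \<Longrightarrow> 3 dvd k"
  and fin2: "\<And>k s. K = Some k \<Longrightarrow> t k \<le> s \<Longrightarrow> st s = Empty"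
begin

lemma idx_down: "idxK K j \<Longrightarrow> i \<le> j \<Longrightarrow> idxK K i"
  unfolding idxK_def by (cases K) auto

lemma mono: "idxK K j \<Longrightarrow> i < j \<Longrightarrow> t i < t j"
proof (induction j)
  case 0 then show ?case by simp
next
  case (Suc j)
  have "t j < t (Suc j)" using inc Suc.prems by simp
  moreover have "idxK K j" using idx_down Suc.prems by simp
  ultimately show ?case using Suc by (cases "i = j") (auto simp: less_Suc_eq)
qed

lemma mono_le: "idxK K j \<Longrightarrow> i \<le> j \<Longrightarrow> t i \<le> t j"
  using mono by (cases "i = j") (auto simp: order_less_imp_le)

lemma t_nonneg: "idxK K j \<Longrightarrow> 0 \<le> t j"
  using mono_le[of j 0] t0 by simp

lemma dmin0: "0 < dmin" using W0 Wd by simp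

lemma grow: "idxK K (3*i) \<Longrightarrow> real i * dmin \<le> t (3*i)"
proof (induction i)
  case 0 then show ?case using t0 by simp
next
  case (Suc i)
  have i3: "idxK K (3*i+3)" using Suc.prems by (simp add: add.commute)
  have i2: "idxK K (3*i+2)" and i1: "idxK K (3*i+1)" and i0: "idxK K (3*i)"
    using idx_down[OF i3] by auto
  have e3: "Suc (3*i+2) = 3*i+3" and e1: "Suc (3*i) = 3*i+1" by simp_all
  have a: "t (3*i+2) < t (3*i+3)" using inc[of "3*i+2", unfolded e3] i3 by blast
  have b: "t (3*i) < t (3*i+1)" using inc[of "3*i", unfolded e1] i1 by blast
  have c: "dmin \<le> t (3*i+2) - t (3*i+1)" using comd i2 by simp
  have "real i * dmin \<le> t (3*i)" using Suc.IH i0 by simp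
  then have "real (Suc i) * dmin \<le> t (3*i+3)" using a b c by (simp add: algebra_simps)
  then show ?case by (simp add: numeral_eq_Suc)
qed

lemma bound: assumes "idxK K j" "t j \<le> u" shows "j \<le> 3 * nat \<lceil>u / dmin\<rceil> + 2"
proof -
  define i where "i = j div 3"
  have j: "j = 3*i + j mod 3" unfolding i_def by simp
  have "3*i \<le> j" using j by linarith
  then have "idxK K (3*i)" "t (3*i) \<le> t j" using idx_down mono_le assms by auto
  then have "real i * dmin \<le> u" using grow assms by (meson order_trans)
  then have "real i \<le> u / dmin" using dmin0 by (simp add: pos_le_divide_eq)
  then have "real i \<le> \<lceil>u / dmin\<rceil>" by (meson le_of_int_ceiling order_trans)
  then have "i \<le> nat \<lceil>u / dmin\<rceil>" by linarith
  then show ?thesis using j by linarith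
qed

lemma jR_props: assumes "u \<ge> 0" shows "idxK K (jR t K u) \<and> t (jR t K u) \<le> u"
  unfolding jR_def
  by (rule GreatestI_nat[of _ 0 "3 * nat \<lceil>u / dmin\<rceil> + 2"])
     (use assms t0 bound in \<open>auto simp: idxK_def split: option.splits\<close>)

lemma jR_max: assumes "idxK K j" "t j \<le> u" shows "j \<le> jR t K u"
  unfolding jR_def
  by (rule Greatest_le_nat[of _ _ "3 * nat \<lceil>u / dmin\<rceil> + 2"]) (use assms bound in auto)

lemma jL_bound: "idxK K j \<and> (j = 0 \<or> t j < u) \<Longrightarrow> j \<le> 3 * nat \<lceil>max u 0 / dmin\<rceil> + 2"
  using bound[of j "max u 0"] by auto

lemma jL_props: "idxK K (jL t K u) \<and> (jL t K u = 0 \<or> t (jL t K u) < u)"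
  unfolding jL_def
  by (rule GreatestI_nat[of _ 0 "3 * nat \<lceil>max u 0 / dmin\<rceil> + 2"])
     (use jL_bound in \<open>auto simp: idxK_def split: option.splits\<close>)

lemma jL_max: assumes "idxK K j" "j = 0 \<or> t j < u" shows "j \<le> jL t K u"
  unfolding jL_def
  by (rule Greatest_le_nat[of _ _ "3 * nat \<lceil>max u 0 / dmin\<rceil> + 2"]) (use assms jL_bound in auto)

lemma not_last: assumes "idxK K j" "j mod 3 \<noteq> 0" shows "idxK K (Suc j)"
proof (cases K)
  case None then show ?thesis by (simp add: idxK_def)
next
  case (Some k)
  have "3 dvd k" using fin Some by simp
  have "j \<le> k" using assms Some by (simp add: idxK_def)
  moreover have "j \<noteq> k" using assms \<open>3 dvd k\<close> by auto
  ultimately show ?thesis using Some by (simp add: idxK_def)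
qed

lemma st_phase:
  assumes "idxK K j" "t j \<le> u" "idxK K (Suc j) \<Longrightarrow> u < t (Suc j)"
  shows "st u = phase j"
proof -
  define i where "i = j div 3"
  have j: "j = 3*i + j mod 3" unfolding i_def by simp
  have "j mod 3 < 3" by simp
  then consider "j mod 3 = 0" | "j mod 3 = 1" | "j mod 3 = 2" by linarith
  then show ?thesis
  proof cases
    case 1
    show ?thesis
    proof (cases "idxK K (Suc j)")
      case True
      have jj: "3*i = j" and sj: "3*i+1 = Suc j" using j 1 by simp_all
      have "st u = Empty" using emp[of i u, unfolded sj, unfolded jj] True assms by blast
      then show ?thesis using 1 by (simp add: phase_def)
    next
      case False
      then obtain k where "K = Some k" "j = k" using assms(1) by (cases K) (auto simp: idxK_def)
      then show ?thesis using fin2 assms 1 by (simp add: phase_def)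
    qed
  next
    case 2
    have s: "idxK K (Suc j)" using not_last assms 2 by simp
    have jj: "3*i+1 = j" and sj: "3*i+2 = Suc j" using j 2 by simp_all
    have "st u = Coming" using com[of i u, unfolded sj, unfolded jj] s assms by blast
    then show ?thesis using 2 by (simp add: phase_def)
  next
    case 3
    have s: "idxK K (Suc j)" using not_last assms 3 by simp
    have jj: "3*i+2 = j" and sj: "3*i+3 = Suc j" using j 3 by simp_all
    have "st u = Incrossing" using inc3[of i u, unfolded sj, unfolded jj] s assms by blast
    then show ?thesis using 3 by (simp add: phase_def)
  qed
qed

lemma st_jR: assumes "u \<ge> 0" shows "st u = phase (jR t K u)"
proof (rule st_phase)
  show "idxK K (jR t K u)" "t (jR t K u) \<le> u" using jR_props assms by auto
  assume "idxK K (Suc (jR t K u))"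
  then show "u < t (Suc (jR t K u))" using jR_max[of "Suc (jR t K u)" u] by force
qed

lemma jL_vs_jR: assumes "u \<ge> 0"
  shows "jL t K u = (if jR t K u = 0 \<or> t (jR t K u) < u then jR t K u else jR t K u - 1)"
proof -
  let ?j = "jR t K u"
  have p: "idxK K ?j" "t ?j \<le> u" using jR_props assms by auto
  have m: "\<And>j. idxK K j \<Longrightarrow> t j \<le> u \<Longrightarrow> j \<le> ?j" using jR_max by simp
  show ?thesis
  proof (cases "?j = 0 \<or> t ?j < u")
    case True
    have "jL t K u = ?j" unfolding jL_def
    proof (rule Greatest_equality)
      show "idxK K ?j \<and> (?j = 0 \<or> t ?j < u)" using p True by simp
      fix y assume "idxK K y \<and> (y = 0 \<or> t y < u)"
      then show "y \<le> ?j" using m[of y] p assms t0 by (cases "y = 0") auto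
    qed
    then show ?thesis using True by simp
  next
    case False
    then have tj: "t ?j = u" "?j > 0" using p by auto
    have "jL t K u = ?j - 1" unfolding jL_def
    proof (rule Greatest_equality)
      have "t (?j - 1) < t ?j" using mono[of ?j "?j - 1"] p tj by simp
      then show "idxK K (?j - 1) \<and> (?j - 1 = 0 \<or> t (?j - 1) < u)"
        using idx_down[OF p(1), of "?j - 1"] tj by simp
      fix y assume y: "idxK K y \<and> (y = 0 \<or> t y < u)"
      show "y \<le> ?j - 1"
      proof (cases "y = 0")
        case False
        then have "t y < u" using y by simp
        then have "y \<le> ?j" using m y by simp
        moreover have "y \<noteq> ?j" using \<open>t y < u\<close> tj by auto
        ultimately show ?thesis by simp
      qed simp
    qed
    then show ?thesis using False by simp
  qed
qed

lemma Dplus: assumes "u \<ge> 0"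
  shows "Dv t W (jR t K u) = (if st u = Coming \<and> Dl t K W u = Infty then Fin (u + W)
           else if st u = Empty \<and> xless (Dl t K W u) Infty then Infty else Dl t K W u)"
proof -
  let ?j = "jR t K u"
  have p: "idxK K ?j" "t ?j \<le> u" using jR_props assms by auto
  have stu: "st u = phase ?j" using st_jR assms by simp
  note jl = jL_vs_jR[OF assms]
  show ?thesis
  proof (cases "?j = 0 \<or> t ?j < u")
    case True
    then have dl: "Dl t K W u = Dv t W ?j" using jl by (simp add: Dl_def)
    have "?j mod 3 < 3" by simp
    then consider "?j mod 3 = 0" | "?j mod 3 = 1" | "?j mod 3 = 2" by linarith
    then show ?thesis
    proof cases
      case 1
      then have "Dv t W ?j = Infty" "st u = Empty" using stu by (simp_all add: Dv_def phase_def)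
      then show ?thesis using dl by simp
    next
      case 2
      then have "Dv t W ?j \<noteq> Infty" "st u = Coming" using stu by (simp_all add: Dv_def phase_def)
      then show ?thesis using dl by simp
    next
      case 3
      then have "st u = Incrossing" using stu by (simp_all add: Dv_def phase_def)
      then show ?thesis using dl by simp
    qed
  next
    case False
    then have tj: "t ?j = u" "?j > 0" "jL t K u = ?j - 1" using p jl by auto
    have "?j mod 3 < 3" by simp
    then consider "?j mod 3 = 0" | "?j mod 3 = 1" | "?j mod 3 = 2" by linarith
    then show ?thesis
    proof cases
      case 1
      then have "(?j - 1) mod 3 = 2" using tj(2) by (rule modA)
      then have "Dl t K W u \<noteq> Infty" "st u = Empty" "Dv t W ?j = Infty"
        using 1 stu tj by (simp_all add: Dl_def Dv_def phase_def)
      then show ?thesis by (cases "Dl t K W u") simp_all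
    next
      case 2
      then have "(?j - 1) mod 3 = 0" by (rule modB)
      moreover have "?j - 1 + 1 = ?j" using tj(2) by simp
      ultimately have "Dl t K W u = Infty" "st u = Coming" "Dv t W ?j = Fin (u + W)"
        using 2 stu tj by (simp_all add: Dl_def Dv_def phase_def)
      then show ?thesis by simp
    next
      case 3
      have j2: "?j \<ge> 2"
      proof (rule ccontr)
        assume "\<not> ?j \<ge> 2" then have "?j = 0 \<or> ?j = 1" by linarith
        then show False using 3 by auto
      qed
      define m where "m = ?j - 2"
      have jm: "?j = m + 2" using j2 m_def by simp
      have "(m + 1) mod 3 = 1" using 3 modC jm by (metis add_diff_cancel_right' one_add_one add.assoc)
      then have "Dl t K W u = Fin (t (m + 1) + W)" using tj(3) jm by (simp add: Dl_def Dv_def)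
      moreover have "Dv t W ?j = Fin (t (m + 1) + W)" using 3 jm by (simp add: Dv_def)
      moreover have "st u = Incrossing" using 3 stu by (simp add: phase_def)
      ultimately show ?thesis by simp
    qed
  qed
qed

lemma right_loc: assumes "u \<ge> 0"
  shows "\<exists>e>0. \<forall>s. u < s \<and> s < u + e \<longrightarrow> jR t K s = jR t K u \<and> jL t K s = jR t K u"
proof -
  let ?j = "jR t K u"
  have p: "idxK K ?j" "t ?j \<le> u" using jR_props assms by auto
  have nx: "u < t (Suc ?j)" if "idxK K (Suc ?j)" using jR_max[of "Suc ?j" u] that by force
  define e where "e = (if idxK K (Suc ?j) then t (Suc ?j) - u else 1)"
  have "e > 0" using nx e_def by auto
  moreover have "jR t K s = ?j \<and> jL t K s = ?j" if s: "u < s" "s < u + e" for s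
  proof -
    have big: "\<not> (idxK K y \<and> t y \<le> s)" if "y > ?j" for y
    proof
      assume y: "idxK K y \<and> t y \<le> s"
      then have "idxK K (Suc ?j)" using idx_down[of y "Suc ?j"] that by simp
      then have "t (Suc ?j) \<le> t y" using mono_le y that by simp
      then show False using s y e_def \<open>idxK K (Suc ?j)\<close> by auto
    qed
    have "jR t K s = ?j" unfolding jR_def[of t K s]
    proof (rule Greatest_equality)
      show "idxK K ?j \<and> t ?j \<le> s" using p s by simp
      fix y assume "idxK K y \<and> t y \<le> s" then show "y \<le> ?j" using big[of y] by (meson not_le)
    qed
    moreover have "jL t K s = ?j" unfolding jL_def[of t K s]
    proof (rule Greatest_equality)
      show "idxK K ?j \<and> (?j = 0 \<or> t ?j < s)" using p s by simp
      fix y assume y: "idxK K y \<and> (y = 0 \<or> t y < s)" then show "y \<le> ?j" using big[of y] by (meson not_le less_imp_le zero_le)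
    qed
    ultimately show ?thesis by simp
  qed
  ultimately show ?thesis by blast
qed

lemma left_loc: assumes "u > 0"
  shows "\<exists>e>0. \<forall>s. u - e < s \<and> s < u \<longrightarrow> jR t K s = jL t K u \<and> jL t K s = jL t K u"
proof -
  let ?j = "jL t K u"
  have p1: "idxK K ?j" using jL_props by blast
  have "?j = 0 \<or> t ?j < u" using jL_props by blast
  then have p2: "t ?j < u" using t0 assms by auto
  note p = p1 p2
  define e where "e = u - t ?j"
  have "e > 0" using p e_def by simp
  moreover have "jR t K s = ?j \<and> jL t K s = ?j" if s: "u - e < s" "s < u" for s
  proof -
    have big: "\<not> (idxK K y \<and> t y \<le> s)" if "y > ?j" for y
    proof
      assume y: "idxK K y \<and> t y \<le> s"
      then have "y \<le> ?j" using jL_max[of y u] s by auto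
      then show False using that by simp
    qed
    have ts: "t ?j < s" using s e_def by simp
    have "jR t K s = ?j" unfolding jR_def[of t K s]
    proof (rule Greatest_equality)
      show "idxK K ?j \<and> t ?j \<le> s" using p ts by simp
      fix y assume "idxK K y \<and> t y \<le> s" then show "y \<le> ?j" using big[of y] by (meson not_le)
    qed
    moreover have "jL t K s = ?j" unfolding jL_def[of t K s]
    proof (rule Greatest_equality)
      show "idxK K ?j \<and> (?j = 0 \<or> t ?j < s)" using p ts by simp
      fix y assume y: "idxK K y \<and> (y = 0 \<or> t y < s)" then show "y \<le> ?j" using big[of y] by (meson not_le less_imp_le zero_le)
    qed
    ultimately show ?thesis by simp
  qed
  ultimately show ?thesis by blast
qed

lemma right_ex: assumes "u \<ge> 0"
  shows "\<exists>e>0. \<forall>s. u < s \<and> s < u + e \<longrightarrow> st s = st u \<and>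
      Dl t K W s = (if st u = Coming \<and> Dl t K W u = Infty then Fin (u + W)
           else if st u = Empty \<and> xless (Dl t K W u) Infty then Infty else Dl t K W u)"
proof -
  obtain e where e: "e > 0" "\<forall>s. u < s \<and> s < u + e \<longrightarrow> jR t K s = jR t K u \<and> jL t K s = jR t K u"
    using right_loc assms by blast
  have H: "\<forall>s. u < s \<and> s < u + e \<longrightarrow> st s = st u \<and> Dl t K W s = Dv t W (jR t K u)"
  proof (intro allI impI)
    fix s assume s: "u < s \<and> s < u + e"
    then have "s \<ge> 0" using assms by simp
    then have "st s = phase (jR t K s)" by (rule st_jR)
    then have "st s = st u" using e(2) s st_jR[OF assms] by simp
    moreover have "Dl t K W s = Dv t W (jR t K u)" using e(2) s unfolding Dl_def by simp
    ultimately show "st s = st u \<and> Dl t K W s = Dv t W (jR t K u)" by simp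
  qed
  show ?thesis unfolding Dplus[OF assms, symmetric] using e(1) H by blast
qed

lemma left_ex: assumes "u > 0"
  shows "\<exists>e>0. \<exists>v. \<forall>s. u - e < s \<and> s < u \<longrightarrow> st s = v \<and> Dl t K W s = Dl t K W u"
proof -
  obtain e where e: "e > 0" "\<forall>s. u - e < s \<and> s < u \<longrightarrow> jR t K s = jL t K u \<and> jL t K s = jL t K u"
    using left_loc assms by blast
  define e' where "e' = min e u"
  have "e' > 0" using e assms e'_def by simp
  moreover have "st s = phase (jL t K u) \<and> Dl t K W s = Dl t K W u" if "u - e' < s" "s < u" for s
  proof -
    have s: "u - e < s" "s < u" using that e'_def by auto
    have "s \<ge> 0" using that e'_def by auto
    then have "st s = phase (jR t K s)" by (rule st_jR)
    then have "st s = phase (jL t K u)" using e(2) s by simp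
    moreover have "Dl t K W s = Dl t K W u" using e(2) s unfolding Dl_def by simp
    ultimately show ?thesis by simp
  qed
  ultimately show ?thesis by blast
qed

lemma trig: assumes "Fin u = Dl t K W u" shows "st u = Coming"
proof -
  define j where "j = jL t K u"
  have dj: "Dl t K W u = Dv t W j" unfolding j_def Dl_def by simp
  have jm: "j mod 3 \<noteq> 0"
  proof
    assume "j mod 3 = 0" then have "Dv t W j = Infty" by (simp add: Dv_def)
    then show False using assms dj by simp
  qed
  then have "j \<noteq> 0" by auto
  have p1: "idxK K j" using jL_props unfolding j_def by blast
  have "j = 0 \<or> t j < u" using jL_props unfolding j_def by blast
  then have p2: "t j < u" using \<open>j \<noteq> 0\<close> by simp
  have s: "idxK K (Suc j)" using not_last p1 jm by simp
  define i where "i = j div 3"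
  have j: "j = 3*i + j mod 3" unfolding i_def by simp
  have "j mod 3 < 3" by simp
  then consider "j mod 3 = 1" | "j mod 3 = 2" using jm by linarith
  then show ?thesis
  proof cases
    case 1
    then have "Dv t W j = Fin (t j + W)" by (simp add: Dv_def)
    then have u: "u = t j + W" using assms dj by simp
    have jj: "3*i+1 = j" and sj: "3*i+2 = Suc j" using j 1 by simp_all
    have "dmin \<le> t (Suc j) - t j" using comd[of i, unfolded sj, unfolded jj] s by blast
    then have "u < t (Suc j)" using u Wd by simp
    then have "st u = phase j" using st_phase[of j u] p1 p2 by simp
    then show ?thesis using 1 by (simp add: phase_def)
  next
    case 2
    then have "Dv t W j = Fin (t (j - 1) + W)" using modD[OF 2] by (simp add: Dv_def)
    then have u: "u = t (j - 1) + W" using assms dj by simp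
    have jj: "3*i+1 = j - 1" and sj: "3*i+2 = j" using j 2 by simp_all
    have "idxK K (3*i+2)" using p1 sj by simp
    then have "dmin \<le> t (3*i+2) - t (3*i+1)" using comd by blast
    then have "dmin \<le> t j - t (j - 1)" unfolding jj sj .
    then have False using u Wd p2 by linarith
    then show ?thesis ..
  qed
qed

lemma Dl0: "Dl t K W 0 = Infty"
proof -
  have "jL t K 0 = 0" unfolding jL_def
  proof (rule Greatest_equality)
    show "idxK K 0 \<and> (0 = (0::nat) \<or> t 0 < 0)" by (simp add: idxK_def split: option.splits)
    fix y assume y: "idxK K y \<and> (y = 0 \<or> t y < 0)"
    show "y \<le> 0"
    proof (rule ccontr)
      assume "\<not> y \<le> 0"
      then have "t y < 0" using y by simp
      then show False using t_nonneg y by force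
    qed
  qed
  then show ?thesis by (simp add: Dl_def Dv_def)
qed

end

lemma tm_track:
  assumes "train_motion dmin dmax P" "0 < W" "W < dmin"
  shows "\<exists>T KK. \<forall>x. track (T x) (KK x) (\<lambda>u. P u x) W dmin"
proof -
  have "\<forall>x. \<exists>p. track (fst p) (snd p) (\<lambda>u. P u x) W dmin"
  proof
    fix x
    obtain t K where H: "t 0 = 0 \<and>
      (\<forall>i. idxK K (Suc i) \<longrightarrow> t i < t (Suc i)) \<and>
      (\<forall>i. idxK K (3*i+1) \<longrightarrow> (\<forall>s. t (3*i) \<le> s \<and> s < t (3*i+1) \<longrightarrow> P s x = Empty)) \<and>
      (\<forall>i. idxK K (3*i+2) \<longrightarrow> (\<forall>s. t (3*i+1) \<le> s \<and> s < t (3*i+2) \<longrightarrow> P s x = Coming) \<and>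
                            dmin \<le> t (3*i+2) - t (3*i+1) \<and> t (3*i+2) - t (3*i+1) \<le> dmax) \<and>
      (\<forall>i. idxK K (3*i+3) \<longrightarrow> (\<forall>s. t (3*i+2) \<le> s \<and> s < t (3*i+3) \<longrightarrow> P s x = Incrossing)) \<and>
      (\<forall>k. K = Some k \<longrightarrow> 3 dvd k \<and> (\<forall>s. t k \<le> s \<longrightarrow> P s x = Empty))"
      using assms(1) unfolding train_motion_def Let_def idxK_def by blast
    have "track t K (\<lambda>u. P u x) W dmin"
      by (unfold_locales) (use H assms(2,3) in blast)+
    then show "\<exists>p. track (fst p) (snd p) (\<lambda>u. P u x) W dmin" by (intro exI[of _ "(t, K)"]) simp
  qed
  then obtain f where "\<forall>x. track (fst (f x)) (snd (f x)) (\<lambda>u. P u x) W dmin" by metis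
  then show ?thesis by (rule_tac exI[of _ "\<lambda>x. fst (f x)"], rule_tac exI[of _ "\<lambda>x. snd (f x)"]) simp
qed

lemma shrinkR: assumes "e > 0"
  shows "\<exists>e'>0. e' \<le> e \<and> (\<forall>s. u < s \<and> s < u + e' \<longrightarrow> Fin s \<noteq> c)"
proof (cases c)
  case (Fin r)
  show ?thesis
  proof (cases "r > u")
    case True
    then show ?thesis using assms Fin by (intro exI[of _ "min e (r - u)"]) auto
  next
    case False
    then show ?thesis using assms Fin by (intro exI[of _ e]) auto
  qed
next
  case Infty
  then show ?thesis using assms by (intro exI[of _ e]) auto
qed

lemma shrinkL: assumes "e > 0"
  shows "\<exists>e'>0. e' \<le> e \<and> (\<exists>B. \<forall>s. u - e' < s \<and> s < u \<longrightarrow> Fin s \<noteq> c \<and> xless (Fin (s + d)) c = B)"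
proof (cases c)
  case (Fin r)
  define e1 where "e1 = (if r < u then min e (u - r) else e)"
  have e1: "e1 > 0" "e1 \<le> e" "\<forall>s. u - e1 < s \<and> s < u \<longrightarrow> Fin s \<noteq> c"
    using assms Fin unfolding e1_def by auto
  show ?thesis
  proof (cases "r - d < u")
    case True
    define e2 where "e2 = min e1 (u - (r - d))"
    have "e2 > 0" "e2 \<le> e" "e2 \<le> e1" using e1 True unfolding e2_def by auto
    moreover have "\<forall>s. u - e2 < s \<and> s < u \<longrightarrow> Fin s \<noteq> c \<and> xless (Fin (s + d)) c = False"
    proof (intro allI impI)
      fix s assume s: "u - e2 < s \<and> s < u"
      then have "u - e1 < s" using \<open>e2 \<le> e1\<close> by simp
      then have "Fin s \<noteq> c" using e1(3) s by blast
      moreover have "r - d < s" using s unfolding e2_def by (simp add: min_def split: if_splits)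
      ultimately show "Fin s \<noteq> c \<and> xless (Fin (s + d)) c = False" using Fin by simp
    qed
    ultimately show ?thesis by blast
  next
    case False
    have "\<forall>s. u - e1 < s \<and> s < u \<longrightarrow> Fin s \<noteq> c \<and> xless (Fin (s + d)) c = True"
      using e1 Fin False by auto
    then show ?thesis using e1 by blast
  qed
next
  case Infty
  then show ?thesis using assms by (intro exI[of _ e]) auto
qed

lemma ctrl_exec_eq:
  fixes s :: "'tr st1"
  assumes nc: "\<not> ((\<exists>x. Fin CT = dl s x) \<and> dr s = DClose \<and> safe_to_open d s CT)"
  shows "ctrl_exec W d s CT = \<lparr>ts = ts s,
     dl = (\<lambda>x. if ts s x = Coming \<and> dl s x = Infty then Fin (CT + W)
               else if ts s x = Empty \<and> xless (dl s x) Infty then Infty else dl s x),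
     dr = (if \<exists>x. Fin CT = dl s x then DClose
           else if dr s = DClose \<and> safe_to_open d s CT then DOpen else dr s)\<rparr>"
proof -
  let ?U = "ctrl_updates W d s CT"
  have cons: "consistent ?U"
    unfolding consistent_def ctrl_updates_def using nc by auto
  have dlx: "(if \<exists>v. (LDeadline x, v) \<in> ?U
                then (case (SOME v. (LDeadline x, v) \<in> ?U) of VX e \<Rightarrow> e | VD _ \<Rightarrow> dl s x)
                else dl s x) = (if ts s x = Coming \<and> dl s x = Infty then Fin (CT + W)
               else if ts s x = Empty \<and> xless (dl s x) Infty then Infty else dl s x)" for x
  proof (cases "ts s x = Coming \<and> dl s x = Infty")
    case True
    then have m: "(LDeadline x, VX (Fin (CT + W))) \<in> ?U" unfolding ctrl_updates_def by blast
    show ?thesis using some_upd[OF cons m] m True by auto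
  next
    case False
    show ?thesis
    proof (cases "ts s x = Empty \<and> xless (dl s x) Infty")
      case True
      then have m: "(LDeadline x, VX Infty) \<in> ?U" unfolding ctrl_updates_def by blast
      show ?thesis using some_upd[OF cons m] m True False by auto
    next
      case False2: False
      then have "\<not> (\<exists>v. (LDeadline x, v) \<in> ?U)" using False unfolding ctrl_updates_def by auto
      then show ?thesis using False False2 by auto
    qed
  qed
  have drx: "(if \<exists>v. (LDir, v) \<in> ?U
            then (case (SOME v. (LDir, v) \<in> ?U) of VD d \<Rightarrow> d | VX _ \<Rightarrow> dr s)
            else dr s) = (if \<exists>x. Fin CT = dl s x then DClose
           else if dr s = DClose \<and> safe_to_open d s CT then DOpen else dr s)"
  proof (cases "\<exists>x. Fin CT = dl s x")
    case True
    then have m: "(LDir, VD DClose) \<in> ?U" unfolding ctrl_updates_def by blast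
    show ?thesis using some_upd[OF cons m] m True by auto
  next
    case False
    show ?thesis
    proof (cases "dr s = DClose \<and> safe_to_open d s CT")
      case True
      then have m: "(LDir, VD DOpen) \<in> ?U" unfolding ctrl_updates_def by simp
      show ?thesis using some_upd[OF cons m] m True False by auto
    next
      case False2: False
      then have "\<not> (\<exists>v. (LDir, v) \<in> ?U)" using False unfolding ctrl_updates_def by auto
      then show ?thesis using False False2 by simp
    qed
  qed
  show ?thesis unfolding ctrl_exec_def exec_upd_def apply_updates_def
    using cons by (intro st1_eq) (simp_all add: dlx drx)
qed

definition DirC :: "(real \<Rightarrow> bool) \<Rightarrow> (real \<Rightarrow> bool) \<Rightarrow> real \<Rightarrow> bool" where
  "DirC trg uns t = (\<exists>s. 0 \<le> s \<and> s < t \<and> trg s \<and> (\<forall>v. s < v \<and> v < t \<longrightarrow> uns v))"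

lemma dirc_right:
  assumes "u \<ge> 0" "\<forall>s. u < s \<and> s < u + e \<longrightarrow> \<not> trg s"
    and "trg u \<Longrightarrow> \<forall>s. u < s \<and> s < u + e \<longrightarrow> uns s"
    and "uns u \<Longrightarrow> \<forall>s. u < s \<and> s < u + e \<longrightarrow> uns s"
    and s: "u < s" "s < u + e"
  shows "DirC trg uns s \<longleftrightarrow> trg u \<or> (DirC trg uns u \<and> uns u)"
proof
  assume "DirC trg uns s"
  then obtain s0 where s0: "0 \<le> s0" "s0 < s" "trg s0" "\<forall>v. s0 < v \<and> v < s \<longrightarrow> uns v"
    unfolding DirC_def by blast
  have "s0 \<le> u"
  proof (rule ccontr)
    assume "\<not> s0 \<le> u" then have "u < s0 \<and> s0 < u + e" using s s0 by simp
    then show False using assms(2) s0(3) by blast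
  qed
  show "trg u \<or> (DirC trg uns u \<and> uns u)"
  proof (cases "s0 = u")
    case True then show ?thesis using s0 by simp
  next
    case False
    then have "s0 < u" using \<open>s0 \<le> u\<close> by simp
    then have "DirC trg uns u" unfolding DirC_def using s0 s by (intro exI[of _ s0]) auto
    moreover have "uns u" using s0 \<open>s0 < u\<close> s by auto
    ultimately show ?thesis by simp
  qed
next
  assume "trg u \<or> (DirC trg uns u \<and> uns u)"
  then show "DirC trg uns s"
  proof
    assume "trg u"
    then show ?thesis unfolding DirC_def using assms s by (intro exI[of _ u]) auto
  next
    assume a: "DirC trg uns u \<and> uns u"
    then obtain s0 where s0: "0 \<le> s0" "s0 < u" "trg s0" "\<forall>v. s0 < v \<and> v < u \<longrightarrow> uns v"
      unfolding DirC_def by blast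
    have "\<forall>v. s0 < v \<and> v < s \<longrightarrow> uns v"
    proof (intro allI impI)
      fix v assume v: "s0 < v \<and> v < s"
      consider "v < u" | "v = u" | "u < v" by linarith
      then show "uns v"
      proof cases
        case 1 then show ?thesis using s0 v by simp
      next
        case 2 then show ?thesis using a by simp
      next
        case 3 then show ?thesis using assms(4) a v s by simp
      qed
    qed
    then show ?thesis unfolding DirC_def using s0 s by (intro exI[of _ s0]) auto
  qed
qed

lemma dirc_left:
  assumes "\<forall>s. u - e < s \<and> s < u \<longrightarrow> \<not> trg s"
    and "\<forall>s1 s2. u - e < s1 \<and> s1 < u \<and> u - e < s2 \<and> s2 < u \<longrightarrow> uns s1 = uns s2"
    and s: "u - e < s" "s < u"
  shows "DirC trg uns s \<longleftrightarrow> DirC trg uns u"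
proof
  assume "DirC trg uns s"
  then obtain s0 where s0: "0 \<le> s0" "s0 < s" "trg s0" "\<forall>v. s0 < v \<and> v < s \<longrightarrow> uns v"
    unfolding DirC_def by blast
  define p where "p = (max s0 (u - e) + s) / 2"
  have p: "s0 < p" "p < s" "u - e < p" using s s0 unfolding p_def by auto
  have "uns p" using s0 p by simp
  have "\<forall>v. s0 < v \<and> v < u \<longrightarrow> uns v"
  proof (intro allI impI)
    fix v assume v: "s0 < v \<and> v < u"
    show "uns v"
    proof (cases "v < s")
      case True then show ?thesis using s0 v by simp
    next
      case False
      then show ?thesis using assms(2) \<open>uns p\<close> p s v by (metis less_trans not_less order_le_less_trans)
    qed
  qed
  then show "DirC trg uns u" unfolding DirC_def using s0 s by (intro exI[of _ s0]) auto
next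
  assume "DirC trg uns u"
  then obtain s0 where s0: "0 \<le> s0" "s0 < u" "trg s0" "\<forall>v. s0 < v \<and> v < u \<longrightarrow> uns v"
    unfolding DirC_def by blast
  have "s0 \<le> u - e"
  proof (rule ccontr)
    assume "\<not> s0 \<le> u - e" then have "u - e < s0 \<and> s0 < u" using s0 by simp
    then show False using assms(1) s0(3) by blast
  qed
  then show "DirC trg uns s" unfolding DirC_def using s0 s by (intro exI[of _ s0]) auto
qed

lemma ts_exec: "ts (ctrl_exec W d s CT) = ts s"
  unfolding ctrl_exec_def exec_upd_def apply_updates_def by simp

theorem mainTheorem16:
  fixes d_close d_open d_min d_max :: real
    and P :: "real \<Rightarrow> ('tr::finite) \<Rightarrow> tstatus"
    and A :: "'tr stfull"
  assumes "0 < d_close" and "0 < d_open" and "0 < d_min" and "0 < d_max"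
    and "d_close < d_min" and "d_min \<le> d_max"
    and "pre_run P"
    and "train_motion d_min d_max P"
    and "initial_state A"
    and "ts A = P 0" and "ct A = 0"
  shows "\<exists>Q. (is_ctrl_run (d_min - d_close) d_open Q \<and> Q 0 = st1.truncate A \<and>
              (\<forall>t\<ge>0. ts (Q t) = P t) \<and> ctrl_immediate (d_min - d_close) d_open Q) \<and>
            (\<forall>Q'. is_ctrl_run (d_min - d_close) d_open Q' \<and> Q' 0 = st1.truncate A \<and>
              (\<forall>t\<ge>0. ts (Q' t) = P t) \<and> ctrl_immediate (d_min - d_close) d_open Q'
              \<longrightarrow> (\<forall>t\<ge>0. Q' t = Q t))"
proof -
  define W where "W = d_min - d_close"
  have W0: "0 < W" and Wd: "W < d_min" using assms unfolding W_def by auto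
  obtain T KK where tr: "\<And>x. track (T x) (KK x) (\<lambda>u. P u x) W d_min"
    using tm_track[OF assms(8) W0 Wd] by blast
  define DL where "DL = (\<lambda>u x. Dl (T x) (KK x) W u)"
  define trg where "trg = (\<lambda>u. \<exists>x. Fin u = DL u x)"
  define uns where "uns = (\<lambda>u. \<not> (\<forall>x. P u x = Empty \<or> xless (Fin (u + d_open)) (DL u x)))"
  define Q where "Q = (\<lambda>t. \<lparr>ts = P t, dl = DL t,
      dr = (if t = 0 then dr A else if DirC trg uns t then DClose else DOpen)\<rparr> :: 'tr st1)"
  define Dp where "Dp = (\<lambda>u x. if P u x = Coming \<and> DL u x = Infty then Fin (u + W)
      else if P u x = Empty \<and> xless (DL u x) Infty then Infty else DL u x)"
  have finU: "finite (UNIV :: 'tr set)" by simp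
  have safeQ: "safe_to_open d_open (Q t) t \<longleftrightarrow> \<not> uns t" for t
    by (simp add: safe_to_open_def Q_def uns_def)
  have trig_x: "P u x = Coming" if "Fin u = DL u x" for u x
    using track.trig[OF tr] that unfolding DL_def by blast
  have DL0: "DL 0 x = Infty" for x using track.Dl0[OF tr] unfolding DL_def by blast
  have P0: "P 0 x = Empty" for x using assms(9,10) unfolding initial_state_def by metis
  have trg_uns: "uns u" if "trg u" for u
  proof -
    obtain x where x: "Fin u = DL u x" using \<open>trg u\<close> trg_def by blast
    then have "P u x = Coming" using trig_x by blast
    then have "P u x \<noteq> Empty \<and> \<not> xless (Fin (u + d_open)) (DL u x)"
      using x[symmetric] assms(2) by simp
    then show ?thesis unfolding uns_def by blast
  qed
  have trg0: "\<not> trg 0" using DL0 unfolding trg_def by simp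
  have uns0: "\<not> uns 0" using P0 unfolding uns_def by simp

  have rightc: "\<exists>e>0. \<forall>x. \<forall>s. u < s \<and> s < u + e \<longrightarrow>
      P s x = P u x \<and> DL s x = Dp u x \<and> Fin s \<noteq> DL s x" if u0: "u \<ge> 0" for u
  proof (rule finite_common[OF finU])
    show "\<forall>x. \<exists>e>0. \<forall>s. u < s \<and> s < u + e \<longrightarrow> P s x = P u x \<and> DL s x = Dp u x \<and> Fin s \<noteq> DL s x"
    proof
      fix x
      obtain e1 where e1: "e1 > 0" "\<forall>s. u < s \<and> s < u + e1 \<longrightarrow> P s x = P u x \<and> DL s x = Dp u x"
        using track.right_ex[OF tr u0, of x] unfolding DL_def Dp_def by blast
      obtain e2 where e2: "e2 > 0" "e2 \<le> e1" "\<forall>s. u < s \<and> s < u + e2 \<longrightarrow> Fin s \<noteq> Dp u x"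
        using shrinkR[OF e1(1), of u "Dp u x"] by blast
      show "\<exists>e>0. \<forall>s. u < s \<and> s < u + e \<longrightarrow> P s x = P u x \<and> DL s x = Dp u x \<and> Fin s \<noteq> DL s x"
        using e1 e2 by (intro exI[of _ e2]) auto
    qed
  next
    show "\<forall>x e e'. (\<forall>s. u < s \<and> s < u + e \<longrightarrow> P s x = P u x \<and> DL s x = Dp u x \<and> Fin s \<noteq> DL s x)
      \<longrightarrow> 0 < e' \<longrightarrow> e' \<le> e \<longrightarrow>
      (\<forall>s. u < s \<and> s < u + e' \<longrightarrow> P s x = P u x \<and> DL s x = Dp u x \<and> Fin s \<noteq> DL s x)"
    proof (intro allI impI)
      fix x e e' s
      assume a: "\<forall>s. u < s \<and> s < u + e \<longrightarrow> P s x = P u x \<and> DL s x = Dp u x \<and> Fin s \<noteq> DL s x"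
        "0 < e'" "e' \<le> e" "u < s \<and> s < u + e'"
      then have "u < s \<and> s < u + e" by simp
      then show "P s x = P u x \<and> DL s x = Dp u x \<and> Fin s \<noteq> DL s x" using a(1) by blast
    qed
  qed
  have tsQ': "ts (Q t) = P t" and dlQ: "dl (Q t) = DL t"
    and drQ: "dr (Q t) = (if t = 0 then dr A else if DirC trg uns t then DClose else DOpen)" for t
    unfolding Q_def by simp_all
  have rightQ: "\<exists>e>0. constR Q u e (ctrl_exec W d_open (Q u) u)" if u0: "u \<ge> 0" for u
  proof -
    obtain e where e: "e > 0" "\<forall>x. \<forall>s. u < s \<and> s < u + e \<longrightarrow>
      P s x = P u x \<and> DL s x = Dp u x \<and> Fin s \<noteq> DL s x" using rightc[OF u0] by blast
    have t: "(\<exists>x. Fin u = dl (Q u) x) = trg u" unfolding trg_def dlQ by simp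
    have nc: "\<not> ((\<exists>x. Fin u = dl (Q u) x) \<and> dr (Q u) = DClose \<and> safe_to_open d_open (Q u) u)"
      unfolding t safeQ using trg_uns by blast
    note ex = ctrl_exec_eq[OF nc, of W]
    have notrg: "\<forall>s. u < s \<and> s < u + e \<longrightarrow> \<not> trg s"
    proof (intro allI impI)
      fix s assume "u < s \<and> s < u + e"
      then have "\<forall>x. Fin s \<noteq> DL s x" using e(2) by blast
      then show "\<not> trg s" unfolding trg_def by blast
    qed
    have h3: "\<forall>s. u < s \<and> s < u + e \<longrightarrow> uns s" if "trg u"
    proof (intro allI impI)
      fix s assume s: "u < s \<and> s < u + e"
      obtain x where x: "Fin u = DL u x" using \<open>trg u\<close> trg_def by blast
      then have c: "P u x = Coming" using trig_x by blast
      have "Dp u x = Fin u" unfolding Dp_def using c x[symmetric] by simp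
      then have "P s x = Coming" "DL s x = Fin u" using e(2) s c by auto
      then have "P s x \<noteq> Empty \<and> \<not> xless (Fin (s + d_open)) (DL s x)" using s assms(2) by simp
      then show "uns s" unfolding uns_def by blast
    qed
    have h4: "\<forall>s. u < s \<and> s < u + e \<longrightarrow> uns s" if "uns u"
    proof (intro allI impI)
      fix s assume s: "u < s \<and> s < u + e"
      obtain x where x: "P u x \<noteq> Empty" "\<not> xless (Fin (u + d_open)) (DL u x)"
        using \<open>uns u\<close> unfolding uns_def by blast
      then obtain r where r: "DL u x = Fin r" "r \<le> u + d_open" by (cases "DL u x") auto
      have "Dp u x = DL u x" using x r unfolding Dp_def by auto
      moreover have "P s x = P u x \<and> DL s x = Dp u x" using e(2) s by blast
      ultimately have "P s x \<noteq> Empty" "DL s x = Fin r" using x r by simp_all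
      then have "P s x \<noteq> Empty \<and> \<not> xless (Fin (s + d_open)) (DL s x)" using s r by simp
      then show "uns s" unfolding uns_def by blast
    qed
    have drs: "DirC trg uns s \<longleftrightarrow> trg u \<or> (DirC trg uns u \<and> uns u)" if "u < s" "s < u + e" for s
      by (rule dirc_right[OF u0 notrg h3 h4 that])
    have "Q s = ctrl_exec W d_open (Q u) u" if s: "u < s" "s < u + e" for s
    proof -
      have "s \<noteq> 0" using s u0 by simp
      have tsq: "ts (Q s) = ts (Q u)" using e(2) s unfolding tsQ' by auto
      have dlq: "dl (Q s) = (\<lambda>x. if ts (Q u) x = Coming \<and> dl (Q u) x = Infty then Fin (u + W)
               else if ts (Q u) x = Empty \<and> xless (dl (Q u) x) Infty then Infty else dl (Q u) x)"
        unfolding tsQ' dlQ using e(2) s unfolding Dp_def by auto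
      have drq: "dr (Q s) = (if \<exists>x. Fin u = dl (Q u) x then DClose
           else if dr (Q u) = DClose \<and> safe_to_open d_open (Q u) u then DOpen else dr (Q u))"
      proof (cases "u = 0")
        case True
        then have "\<not> DirC trg uns s" using drs[OF s] trg0 uns0 by simp
        then have "dr (Q s) = DOpen" unfolding drQ using \<open>s \<noteq> 0\<close> by simp
        moreover have "\<not> trg u" using True trg0 by simp
        moreover have "safe_to_open d_open (Q u) u" using safeQ uns0 True by simp
        ultimately show ?thesis unfolding t by (cases "dr (Q u)") auto
      next
        case False
        have "dr (Q s) = (if trg u \<or> (DirC trg uns u \<and> uns u) then DClose else DOpen)"
          unfolding drQ using drs[OF s] \<open>s \<noteq> 0\<close> by simp
        moreover have "dr (Q u) = (if DirC trg uns u then DClose else DOpen)" unfolding drQ using False by simp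
        ultimately show ?thesis unfolding t safeQ by auto
      qed
      show ?thesis unfolding ex by (rule st1_eq) (simp_all only: st1.select_convs tsq dlq drq)
    qed
    then show ?thesis using e(1) unfolding constR_def by blast
  qed

  have leftc: "\<exists>e>0. \<forall>x. e \<le> u \<and> (\<forall>s1 s2. u - e < s1 \<and> s1 < u \<and> u - e < s2 \<and> s2 < u \<longrightarrow>
      P s1 x = P s2 x \<and> DL s1 x = DL u x \<and> Fin s1 \<noteq> DL s1 x \<and>
      xless (Fin (s1 + d_open)) (DL s1 x) = xless (Fin (s2 + d_open)) (DL s2 x))" if u0: "u > 0" for u
  proof (rule finite_common[OF finU])
    show "\<forall>x. \<exists>e>0. e \<le> u \<and> (\<forall>s1 s2. u - e < s1 \<and> s1 < u \<and> u - e < s2 \<and> s2 < u \<longrightarrow>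
      P s1 x = P s2 x \<and> DL s1 x = DL u x \<and> Fin s1 \<noteq> DL s1 x \<and>
      xless (Fin (s1 + d_open)) (DL s1 x) = xless (Fin (s2 + d_open)) (DL s2 x))"
    proof
      fix x
      obtain e1 v where e1: "e1 > 0" "\<forall>s. u - e1 < s \<and> s < u \<longrightarrow> P s x = v \<and> DL s x = DL u x"
        using track.left_ex[OF tr u0, of x] unfolding DL_def by blast
      obtain e2 B where e2: "e2 > 0" "e2 \<le> e1"
        "\<forall>s. u - e2 < s \<and> s < u \<longrightarrow> Fin s \<noteq> DL u x \<and> xless (Fin (s + d_open)) (DL u x) = B"
        using shrinkL[OF e1(1), of u "DL u x" d_open] by blast
      define e3 where "e3 = min e2 u"
      have e3: "e3 > 0" "e3 \<le> u" "e3 \<le> e2" using e2 u0 unfolding e3_def by auto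
      have "\<forall>s1 s2. u - e3 < s1 \<and> s1 < u \<and> u - e3 < s2 \<and> s2 < u \<longrightarrow>
      P s1 x = P s2 x \<and> DL s1 x = DL u x \<and> Fin s1 \<noteq> DL s1 x \<and>
      xless (Fin (s1 + d_open)) (DL s1 x) = xless (Fin (s2 + d_open)) (DL s2 x)"
      proof (intro allI impI)
        fix s1 s2 assume a: "u - e3 < s1 \<and> s1 < u \<and> u - e3 < s2 \<and> s2 < u"
        then have a1: "u - e2 < s1" "u - e2 < s2" "u - e1 < s1" "u - e1 < s2" using e3 e2 by auto
        show "P s1 x = P s2 x \<and> DL s1 x = DL u x \<and> Fin s1 \<noteq> DL s1 x \<and>
          xless (Fin (s1 + d_open)) (DL s1 x) = xless (Fin (s2 + d_open)) (DL s2 x)"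
        proof -
          have "P s1 x = v" "DL s1 x = DL u x" "P s2 x = v" "DL s2 x = DL u x"
            using e1(2) a a1 by auto
          moreover have "Fin s1 \<noteq> DL u x" "xless (Fin (s1 + d_open)) (DL u x) = B"
            "xless (Fin (s2 + d_open)) (DL u x) = B" using e2(3) a a1 by auto
          ultimately show ?thesis by simp
        qed
      qed
      then show "\<exists>e>0. e \<le> u \<and> (\<forall>s1 s2. u - e < s1 \<and> s1 < u \<and> u - e < s2 \<and> s2 < u \<longrightarrow>
      P s1 x = P s2 x \<and> DL s1 x = DL u x \<and> Fin s1 \<noteq> DL s1 x \<and>
      xless (Fin (s1 + d_open)) (DL s1 x) = xless (Fin (s2 + d_open)) (DL s2 x))"
        using e3 by blast
    qed
  next
    show "\<forall>x e e'. (e \<le> u \<and> (\<forall>s1 s2. u - e < s1 \<and> s1 < u \<and> u - e < s2 \<and> s2 < u \<longrightarrow>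
      P s1 x = P s2 x \<and> DL s1 x = DL u x \<and> Fin s1 \<noteq> DL s1 x \<and>
      xless (Fin (s1 + d_open)) (DL s1 x) = xless (Fin (s2 + d_open)) (DL s2 x))) \<longrightarrow> 0 < e' \<longrightarrow> e' \<le> e \<longrightarrow>
      (e' \<le> u \<and> (\<forall>s1 s2. u - e' < s1 \<and> s1 < u \<and> u - e' < s2 \<and> s2 < u \<longrightarrow>
      P s1 x = P s2 x \<and> DL s1 x = DL u x \<and> Fin s1 \<noteq> DL s1 x \<and>
      xless (Fin (s1 + d_open)) (DL s1 x) = xless (Fin (s2 + d_open)) (DL s2 x)))"
    proof (intro allI impI)
      fix x e e'
      assume a: "e \<le> u \<and> (\<forall>s1 s2. u - e < s1 \<and> s1 < u \<and> u - e < s2 \<and> s2 < u \<longrightarrow>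
      P s1 x = P s2 x \<and> DL s1 x = DL u x \<and> Fin s1 \<noteq> DL s1 x \<and>
      xless (Fin (s1 + d_open)) (DL s1 x) = xless (Fin (s2 + d_open)) (DL s2 x))" "0 < e'" "e' \<le> e"
      show "e' \<le> u \<and> (\<forall>s1 s2. u - e' < s1 \<and> s1 < u \<and> u - e' < s2 \<and> s2 < u \<longrightarrow>
      P s1 x = P s2 x \<and> DL s1 x = DL u x \<and> Fin s1 \<noteq> DL s1 x \<and>
      xless (Fin (s1 + d_open)) (DL s1 x) = xless (Fin (s2 + d_open)) (DL s2 x))"
      proof (rule conjI, use a in simp, intro allI impI)
        fix s1 s2 assume b: "u - e' < s1 \<and> s1 < u \<and> u - e' < s2 \<and> s2 < u"
        then have "u - e < s1 \<and> s1 < u \<and> u - e < s2 \<and> s2 < u" using a(3) by simp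
        then show "P s1 x = P s2 x \<and> DL s1 x = DL u x \<and> Fin s1 \<noteq> DL s1 x \<and>
          xless (Fin (s1 + d_open)) (DL s1 x) = xless (Fin (s2 + d_open)) (DL s2 x)" using a(1) by blast
      qed
    qed
  qed
  have leftQ: "\<exists>e>0. \<exists>v. constL Q u e v \<and> dl v = dl (Q u) \<and> dr v = dr (Q u)" if u0: "u > 0" for u
  proof -
    obtain e where e: "e > 0" "\<forall>x. e \<le> u \<and> (\<forall>s1 s2. u - e < s1 \<and> s1 < u \<and> u - e < s2 \<and> s2 < u \<longrightarrow>
      P s1 x = P s2 x \<and> DL s1 x = DL u x \<and> Fin s1 \<noteq> DL s1 x \<and>
      xless (Fin (s1 + d_open)) (DL s1 x) = xless (Fin (s2 + d_open)) (DL s2 x))"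
      using leftc[OF u0] by blast
    have eu: "e \<le> u" using e by blast
    have notrg: "\<forall>s. u - e < s \<and> s < u \<longrightarrow> \<not> trg s" using e unfolding trg_def by blast
    have unsc: "\<forall>s1 s2. u - e < s1 \<and> s1 < u \<and> u - e < s2 \<and> s2 < u \<longrightarrow> uns s1 = uns s2"
    proof (intro allI impI)
      fix s1 s2 assume a: "u - e < s1 \<and> s1 < u \<and> u - e < s2 \<and> s2 < u"
      then have "\<forall>x. P s1 x = P s2 x \<and> xless (Fin (s1 + d_open)) (DL s1 x) = xless (Fin (s2 + d_open)) (DL s2 x)"
        using e by blast
      then show "uns s1 = uns s2" unfolding uns_def by simp
    qed
    define s0 where "s0 = u - e / 2"
    have s0: "u - e < s0" "s0 < u" "s0 > 0" using e(1) eu unfolding s0_def by auto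
    have "Q s = Q s0" if s: "u - e < s" "s < u" for s
    proof -
      have "s > 0" using s eu by simp
      have "\<forall>x. P s x = P s0 x \<and> DL s x = DL u x \<and> DL s0 x = DL u x" using e s s0 by blast
      then have "P s = P s0" "DL s = DL s0" by auto
      moreover have "DirC trg uns s = DirC trg uns s0"
        using dirc_left[OF notrg unsc s] dirc_left[OF notrg unsc s0(1,2)] by simp
      ultimately show ?thesis using \<open>s > 0\<close> s0 by (intro st1_eq) (simp_all add: tsQ' dlQ drQ)
    qed
    then have "constL Q u e (Q s0)" unfolding constL_def by blast
    moreover have "dl (Q s0) = dl (Q u)"
    proof -
      have "\<forall>x. DL s0 x = DL u x" using e s0 by blast
      then show ?thesis unfolding dlQ by auto
    qed
    moreover have "dr (Q s0) = dr (Q u)"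
      using dirc_left[OF notrg unsc s0(1,2)] s0 u0 unfolding drQ by simp
    ultimately show ?thesis using e(1) by blast
  qed

  have rv: "right_val Q u = ctrl_exec W d_open (Q u) u" if "u \<ge> 0" for u
    using rightQ[OF that] right_val_eq by metis
  have prQ: "pre_run Q"
  proof (rule pre_run_intro)
    show "\<forall>t\<ge>0. \<exists>e>0. \<exists>v. constR Q t e v" using rightQ by blast
    show "\<forall>t>0. \<exists>e>0. \<exists>v. constL Q t e v" using leftQ by blast
  qed
  have runQ: "is_ctrl_run W d_open Q"
    unfolding is_ctrl_run_def
  proof (intro conjI allI impI)
    show "pre_run Q" by (rule prQ)
  next
    fix t :: real assume "t \<ge> 0" "right_val Q t \<noteq> Q t"
    then show "right_val Q t = ctrl_exec W d_open (Q t) t" using rv by blast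
  next
    fix t :: real assume "t \<ge> 0" "right_val Q t \<noteq> Q t"
    then show "ts (right_val Q t) = ts (Q t)" using rv ts_exec by metis
  next
    fix t :: real assume "t > 0" "Q t \<noteq> left_val Q t"
    obtain e v where "e > 0" "constL Q t e v" "dl v = dl (Q t)" "dr v = dr (Q t)"
      using leftQ[OF \<open>t > 0\<close>] by blast
    then show "dl (Q t) = dl (left_val Q t)" using left_val_eq by metis
  next
    fix t :: real assume "t > 0" "Q t \<noteq> left_val Q t"
    obtain e v where "e > 0" "constL Q t e v" "dl v = dl (Q t)" "dr v = dr (Q t)"
      using leftQ[OF \<open>t > 0\<close>] by blast
    then show "dr (Q t) = dr (left_val Q t)" using left_val_eq by metis
  qed
  have immQ: "ctrl_immediate W d_open Q"
    unfolding ctrl_immediate_def using rv by blast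
  have Q0: "Q 0 = st1.truncate A"
  proof -
    have "dl A = (\<lambda>x. Infty)" using assms(9) unfolding initial_state_def by auto
    then show ?thesis unfolding Q_def st1.truncate_def using DL0 assms(10) by auto
  qed
  have tsQ: "\<forall>t\<ge>0. ts (Q t) = P t" unfolding Q_def by simp
  show ?thesis
  proof (rule exI[of _ Q], rule conjI)
    show "is_ctrl_run (d_min - d_close) d_open Q \<and> Q 0 = st1.truncate A \<and>
              (\<forall>t\<ge>0. ts (Q t) = P t) \<and> ctrl_immediate (d_min - d_close) d_open Q"
      using runQ Q0 tsQ immQ W_def by simp
  next
    show "\<forall>Q'. is_ctrl_run (d_min - d_close) d_open Q' \<and> Q' 0 = st1.truncate A \<and>
              (\<forall>t\<ge>0. ts (Q' t) = P t) \<and> ctrl_immediate (d_min - d_close) d_open Q'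
              \<longrightarrow> (\<forall>t\<ge>0. Q' t = Q t)"
    proof (intro allI impI)
    fix Q' and t :: real assume H: "is_ctrl_run (d_min - d_close) d_open Q' \<and> Q' 0 = st1.truncate A \<and>
              (\<forall>t\<ge>0. ts (Q' t) = P t) \<and> ctrl_immediate (d_min - d_close) d_open Q'"
      and "t \<ge> 0"
    have "\<forall>t\<ge>0. Q' t = Q t"
      by (rule run_unique[of W d_open Q' Q]) (use H runQ immQ Q0 tsQ W_def in auto)
    then show "Q' t = Q t" using \<open>t \<ge> 0\<close> by blast
    qed
  qed
qed

end
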